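(* For every parameter $(\alpha,\theta,\nu)$ where $\nu$ is a probability distribution on the positive integers and either ($0<\alpha<1$ and $\theta>-\alpha$) or ($\alpha<0$ and $\theta=-k\alpha$ for some positive integer $k$), the Hollywood process $(\mathcal{Y}_n)_{n\ge1}$ with parameter $(\alpha,\theta,\nu)$ determines an edge exchangeable probability distribution on $\mathfrak{E}_{\mathbb{N}}$.
   Context: $\mathrm{fin}(\mathcal{P})$ is the set of finite sequences of elements of $\mathcal{P}$. An interaction process $\mathcal{I}:S\to\mathrm{fin}(\mathcal{P})$ ($S\subseteq\mathbb{N}$) induces the edge-labeled network $\mathcal{E}_{\mathcal{I}}$: the equivalence class of $\mathcal{I}$ under relabeling vertices by bijections $\rho$ of the population (acting entrywise on each sequence), keeping edge labels $i\in S$. $\mathfrak{E}_S$ is the set of such networks; restriction to $S'\subseteq S$ deletes edges labeled outside $S'$. For a permutation $\sigma$ of $S$, $\mathcal{E}^\sigma$ is induced by $\mathcal{I}^\sigma(i)=\mathcal{I}(\sigma^{-1}(i))$. A random $\mathcal{Y}\in\mathfrak{E}_S$ is edge exchangeable if $\mathcal{Y}^\sigma$ has the same distribution as $\mathcal{Y}$ for every permutation $\sigma:S\to S$. Hollywood process with parameter $(\alpha,\theta,\nu)$: generate $X_1,X_2,\dots$ as follows. For each $n$, independently draw $K_n\sim\nu$; given $K_n=k$ choose $X_{n,1},\dots,X_{n,k}$ sequentially. Let $V_n(j)$ be the number of distinct labels among $X_1,\dots,X_{n-1},X_{n,1},\dots,X_{n,j-1}$ (labels are $1,2,\dots$ assigned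 in order of first appearance), and for $i\le V_n(j)$ let $D_{n,j}(i)$ be the number of occurrences of label $i$ among these. Then $\mathrm{pr}(X_{n,j}=i\mid\text{past})\propto D_{n,j}(i)-\alpha$ for $i=1,\dots,V_n(j)$ and $\propto\theta+\alpha V_n(j)$ for $i=V_n(j)+1$. Set $X_n=(X_{n,1},\dots,X_{n,K_n})$, $\mathcal{X}_n:[n]\to\mathrm{fin}(\mathbb{N})$, $\mathcal{X}_n(i)=X_i$, and $\mathcal{Y}_n=\mathcal{E}_{\mathcal{X}_n}\in\mathfrak{E}_{[n]}$. The $\mathcal{Y}_n$ are consistent under restriction and define a random element of $\mathfrak{E}_{\mathbb{N}}$. *)

theory Defs
  imports "HOL-Probability.Probability" "HOL-Combinatorics.Permutations"
begin

text \<open>Vertex labels are positive naturals 1,2,..., assigned in order of first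
appearance. The state of the process is the flat list ds of all labels drawn so
far.\<close>

definition hw_weights :: "real \<Rightarrow> real \<Rightarrow> nat list \<Rightarrow> (nat \<times> real) list" where
  "hw_weights \<alpha> \<theta> ds =
     (let V = card (set ds) in
      map (\<lambda>i. (i, real (count_list ds i) - \<alpha>)) [1..<V+1] @ [(V+1, \<theta> + \<alpha> * real V)])"

definition hw_step :: "real \<Rightarrow> real \<Rightarrow> nat list \<Rightarrow> nat pmf" where
  "hw_step \<alpha> \<theta> ds =
     (if ds = [] then return_pmf 1
      else (let w = hw_weights \<alpha> \<theta> ds; t = sum_list (map snd w) in
            pmf_of_list (map (\<lambda>(i, x). (i, x / t)) w)))"

fun hw_edge :: "real \<Rightarrow> real \<Rightarrow> nat \<Rightarrow> nat list \<Rightarrow> nat list pmf" where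
  "hw_edge \<alpha> \<theta> 0 ds = return_pmf []"
| "hw_edge \<alpha> \<theta> (Suc k) ds =
     bind_pmf (hw_step \<alpha> \<theta> ds) (\<lambda>x.
     bind_pmf (hw_edge \<alpha> \<theta> k (ds @ [x])) (\<lambda>xs. return_pmf (x # xs)))"

text \<open>Joint law of (X_1,...,X_n) (edge X_{i+1} is the i-th list entry).\<close>
fun hollywood :: "real \<Rightarrow> real \<Rightarrow> nat pmf \<Rightarrow> nat \<Rightarrow> nat list list pmf" where
  "hollywood \<alpha> \<theta> \<nu> 0 = return_pmf []"
| "hollywood \<alpha> \<theta> \<nu> (Suc n) =
     bind_pmf (hollywood \<alpha> \<theta> \<nu> n) (\<lambda>es.
     bind_pmf \<nu> (\<lambda>k.
     bind_pmf (hw_edge \<alpha> \<theta> k (concat es)) (\<lambda>e. return_pmf (es @ [e]))))"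

text \<open>Edge-labeled network induced by an interaction process (edges indexed by
positions of the list): its equivalence class under relabelling vertices by
bijections of the population.\<close>
definition network :: "nat list list \<Rightarrow> nat list list set" where
  "network es = {map (map \<rho>) es | \<rho>. bij \<rho>}"

definition hollywood_network :: "real \<Rightarrow> real \<Rightarrow> nat pmf \<Rightarrow> nat \<Rightarrow> nat list list set pmf" where
  "hollywood_network \<alpha> \<theta> \<nu> n = map_pmf network (hollywood \<alpha> \<theta> \<nu> n)"

text \<open>I^sigma(i) = I(sigma^{-1} i).\<close>
definition edge_perm :: "(nat \<Rightarrow> nat) \<Rightarrow> nat list list \<Rightarrow> nat list list" where
  "edge_perm \<sigma> es = permute_list (inv \<sigma>) es"

end

theory Submission
  imports Defs
begin
lemma bij_extend:
  fixes f :: "'a \<Rightarrow> 'a"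
  assumes fin: "finite A" and inj: "inj_on f A"
  shows "\<exists>\<pi>. bij \<pi> \<and> (\<forall>x\<in>A. \<pi> x = f x)"
proof -
  define B where "B = f ` A"
  define S where "S = A \<union> B"
  have finS: "finite S" using fin by (simp add: S_def B_def)
  have cAB: "card A = card B" using inj by (simp add: B_def card_image)
  have "card (S - A) = card (S - B)"
    using finS cAB by (simp add: card_Diff_subset S_def)
  then obtain u where u: "bij_betw u (S - A) (S - B)"
    by (meson finite_Diff finite_same_card_bij finS)
  define \<pi> where "\<pi> x = (if x \<in> A then f x else if x \<in> S then u x else x)" for x
  have b1: "bij_betw \<pi> A B"
  proof -
    have "bij_betw f A B" using inj by (simp add: B_def inj_on_imp_bij_betw)
    moreover have "bij_betw \<pi> A B = bij_betw f A B"
      by (rule bij_betw_cong) (simp add: \<pi>_def)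
    ultimately show ?thesis by simp
  qed
  have b2: "bij_betw \<pi> (S - A) (S - B)"
  proof -
    have "bij_betw \<pi> (S - A) (S - B) = bij_betw u (S - A) (S - B)"
      by (rule bij_betw_cong) (simp add: \<pi>_def)
    then show ?thesis using u by simp
  qed
  have "bij_betw \<pi> (A \<union> (S - A)) (B \<union> (S - B))"
    by (rule bij_betw_combine[OF b1 b2]) blast
  moreover have "A \<union> (S - A) = S" "B \<union> (S - B) = S" by (auto simp: S_def)
  ultimately have "bij_betw \<pi> S S" by simp
  moreover have "{x. \<pi> x \<noteq> x} \<subseteq> S" by (auto simp: \<pi>_def S_def)
  ultimately have "\<pi> permutes S" by (simp add: permutes_altdef)
  then have "bij \<pi>" by (rule permutes_bij)
  then show ?thesis by (auto simp: \<pi>_def)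
qed

definition fo :: "'a list \<Rightarrow> 'a list" where
  "fo ds = rev (remdups (rev ds))"

fun pos :: "'a list \<Rightarrow> 'a \<Rightarrow> nat" where
  "pos [] y = 0"
| "pos (x # xs) y = (if x = y then 0 else Suc (pos xs y))"

definition cf :: "'a list \<Rightarrow> 'a \<Rightarrow> nat" where
  "cf ds y = Suc (pos (fo ds) y)"

definition canonical :: "nat list \<Rightarrow> bool" where
  "canonical ds \<longleftrightarrow> map (cf ds) ds = ds"

lemma fo_snoc: "fo (ds @ [x]) = (if x \<in> set ds then fo ds else fo ds @ [x])"
  by (simp add: fo_def)

lemma set_fo[simp]: "set (fo ds) = set ds"
  by (simp add: fo_def)

lemma distinct_fo: "distinct (fo ds)"
  by (simp add: fo_def)

lemma length_fo: "length (fo ds) = card (set ds)"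
  using distinct_card[OF distinct_fo, of ds] by simp

lemma pos_append: "y \<in> set xs \<Longrightarrow> pos (xs @ ys) y = pos xs y"
  by (induction xs) auto

lemma pos_append2: "y \<notin> set xs \<Longrightarrow> pos (xs @ ys) y = length xs + pos ys y"
  by (induction xs) auto

lemma pos_nth: "y \<in> set xs \<Longrightarrow> xs ! pos xs y = y"
  by (induction xs) auto

lemma pos_map: "inj_on f (set xs) \<Longrightarrow> y \<in> set xs \<Longrightarrow> pos (map f xs) (f y) = pos xs y"
proof (induction xs)
  case Nil
  then show ?case by simp
next
  case (Cons a xs)
  show ?case
  proof (cases "a = y")
    case True
    then show ?thesis by simp
  next
    case False
    have i: "inj_on f (set xs)" using Cons.prems(1) by (rule inj_on_subset) auto
    have y: "y \<in> set xs" using Cons.prems(2) False by simp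
    have ne: "f a \<noteq> f y"
    proof
      assume "f a = f y"
      then have "a = y" using Cons.prems(1) y by (auto dest: inj_onD)
      then show False using False by simp
    qed
    have "pos (map f (a # xs)) (f y) = Suc (pos (map f xs) (f y))" using ne by simp
    also have "\<dots> = Suc (pos xs y)" using Cons.IH[OF i y] by simp
    also have "\<dots> = pos (a # xs) y" using False by simp
    finally show ?thesis .
  qed
qed

lemma inj_cf: "inj_on (cf ds) (set ds)"
proof (rule inj_onI)
  fix x y assume "x \<in> set ds" "y \<in> set ds" "cf ds x = cf ds y"
  then have "pos (fo ds) x = pos (fo ds) y" by (simp add: cf_def)
  moreover have "fo ds ! pos (fo ds) x = x" using \<open>x \<in> set ds\<close> by (simp add: pos_nth)
  moreover have "fo ds ! pos (fo ds) y = y" using \<open>y \<in> set ds\<close> by (simp add: pos_nth)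
  ultimately show "x = y" by metis
qed

lemma fo_map: "inj_on f (set ds) \<Longrightarrow> fo (map f ds) = map f (fo ds)"
proof (induction ds rule: rev_induct)
  case Nil
  then show ?case by (simp add: fo_def)
next
  case (snoc x xs)
  have inj: "inj_on f (set xs)" using snoc.prems by (auto intro: inj_on_subset)
  have "f x \<in> f ` set xs \<longleftrightarrow> x \<in> set xs"
    using snoc.prems by (auto simp: inj_on_def)
  then show ?case using snoc.IH[OF inj] by (simp add: fo_snoc)
qed

lemma cf_map: "inj_on f (set ds) \<Longrightarrow> y \<in> set ds \<Longrightarrow> cf (map f ds) (f y) = cf ds y"
  by (simp add: cf_def fo_map pos_map inj_on_subset)

lemma cf_snoc: "y \<in> set ds \<Longrightarrow> cf (ds @ [x]) y = cf ds y"
  by (simp add: cf_def fo_snoc pos_append)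

lemma cf_snoc_new: "x \<notin> set ds \<Longrightarrow> cf (ds @ [x]) x = Suc (card (set ds))"
  by (simp add: cf_def fo_snoc pos_append2 length_fo)

lemma canonical_Nil[simp]: "canonical []"
  by (simp add: canonical_def)

lemma canonical_fix: "canonical ds \<Longrightarrow> y \<in> set ds \<Longrightarrow> cf ds y = y"
  unfolding canonical_def by (metis map_eq_conv map_ident)

lemma canonical_snoc:
  "canonical (ds @ [x]) \<longleftrightarrow> canonical ds \<and> (x \<in> set ds \<or> x = Suc (card (set ds)))"
proof -
  have m: "map (cf (ds @ [x])) ds = map (cf ds) ds"
    by (simp add: cf_snoc)
  show ?thesis
  proof (cases "x \<in> set ds")
    case True
    have "canonical ds \<Longrightarrow> cf ds x = x" using canonical_fix[of ds x] True by simp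
    then show ?thesis
      using True by (auto simp: canonical_def m cf_snoc)
  next
    case False
    then show ?thesis
      by (auto simp: canonical_def m cf_snoc_new)
  qed
qed

lemma canonical_set: "canonical ds \<Longrightarrow> set ds = {1..card (set ds)}"
proof (induction ds rule: rev_induct)
  case Nil
  then show ?case by simp
next
  case (snoc x xs)
  then have c: "canonical xs" and x: "x \<in> set xs \<or> x = Suc (card (set xs))"
    by (auto simp: canonical_snoc)
  note IH = snoc.IH[OF c]
  show ?case
  proof (cases "x \<in> set xs")
    case True
    then have e: "set (xs @ [x]) = set xs" by auto
    show ?thesis unfolding e by (rule IH)
  next
    case False
    then have "x = Suc (card (set xs))" using x by simp
    define V where "V = card (set xs)"
    have IH': "set xs = {1..V}" unfolding V_def by (rule IH)
    have "card (set (xs @ [x])) = Suc V" using False by (simp add: V_def)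
    moreover have "set (xs @ [x]) = {1..Suc V}"
      using \<open>x = Suc (card (set xs))\<close> by (simp add: IH' V_def[symmetric] atLeastAtMostSuc_conv)
    ultimately show ?thesis by simp
  qed
qed

lemma canonical_canon: "canonical (map (cf ds) ds)"
proof -
  have "map (cf (map (cf ds) ds)) (map (cf ds) ds) = map (cf ds) ds"
    by (simp add: cf_map[OF inj_cf])
  then show ?thesis by (simp add: canonical_def)
qed

lemma canon_canonical: "canonical ds \<Longrightarrow> map (cf ds) ds = ds"
  by (simp add: canonical_def)

lemma pmf_of_list_distinct:
  fixes h :: "'a \<Rightarrow> real"
  assumes d: "distinct xs" and nn: "\<And>i. i \<in> set xs \<Longrightarrow> h i \<ge> 0"
    and s1: "sum_list (map h xs) = 1"
  shows "pmf (pmf_of_list (map (\<lambda>i. (i, h i)) xs)) x = (if x \<in> set xs then h x else 0)"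
proof -
  have wf: "pmf_of_list_wf (map (\<lambda>i. (i, h i)) xs)"
    using nn s1 by (intro pmf_of_list_wfI) (auto simp: o_def)
  have "pmf (pmf_of_list (map (\<lambda>i. (i, h i)) xs)) x
      = sum_list (map snd (filter (\<lambda>z. fst z = x) (map (\<lambda>i. (i, h i)) xs)))"
    by (rule pmf_pmf_of_list[OF wf])
  also have "\<dots> = sum_list (map h (filter (\<lambda>i. i = x) xs))"
    by (simp add: filter_map o_def)
  also have "\<dots> = sum_list (map (\<lambda>i. if i = x then h i else 0) xs)"
    by (simp add: sum_list_map_filter')
  also have "\<dots> = (\<Sum>i\<in>set xs. if i = x then h i else 0)"
    by (rule sum_list_distinct_conv_sum_set[OF d])
  also have "\<dots> = (if x \<in> set xs then h x else 0)"
    by (simp add: sum.delta')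
  finally show ?thesis .
qed

definition rr :: "real \<Rightarrow> real \<Rightarrow> nat list \<Rightarrow> nat \<Rightarrow> real" where
  "rr \<alpha> \<theta> s x =
    (if s = [] then (if x = 1 then 1 else 0)
     else if x \<in> set s then (real (count_list s x) - \<alpha>) / (real (length s) + \<theta>)
     else if x = Suc (card (set s)) then (\<theta> + \<alpha> * real (card (set s))) / (real (length s) + \<theta>)
     else 0)"

definition good :: "real \<Rightarrow> real \<Rightarrow> nat list \<Rightarrow> bool" where
  "good \<alpha> \<theta> s \<longleftrightarrow> canonical s \<and> (s \<noteq> [] \<longrightarrow> \<theta> + \<alpha> * real (card (set s)) \<ge> 0)"

definition params :: "real \<Rightarrow> real \<Rightarrow> bool" where
  "params \<alpha> \<theta> \<longleftrightarrow> (0 < \<alpha> \<and> \<alpha> < 1 \<and> \<theta> > - \<alpha>) \<or>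
                 (\<alpha> < 0 \<and> (\<exists>k::nat. k > 0 \<and> \<theta> = - real k * \<alpha>))"

lemma params_basic: "params \<alpha> \<theta> \<Longrightarrow> \<alpha> < 1 \<and> \<theta> + 1 > 0"
  unfolding params_def
proof (elim disjE conjE exE)
  fix k :: nat assume "\<alpha> < 0" "k > 0" "\<theta> = - real k * \<alpha>"
  moreover have "real k * \<alpha> < 0" using \<open>\<alpha> < 0\<close> \<open>k > 0\<close> by (simp add: mult_pos_neg)
  ultimately show ?thesis by simp
qed simp

lemma step_pmf:
  assumes p: "params \<alpha> \<theta>" and g: "good \<alpha> \<theta> s"
  shows "pmf (hw_step \<alpha> \<theta> s) x = rr \<alpha> \<theta> s x"
proof (cases "s = []")
  case True
  then show ?thesis by (simp add: hw_step_def rr_def)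
next
  case False
  define V where "V = card (set s)"
  define t where "t = real (length s) + \<theta>"
  have cs: "canonical s" and w: "\<theta> + \<alpha> * real V \<ge> 0" using g False by (auto simp: good_def V_def)
  have setS: "set s = {1..V}" unfolding V_def by (rule canonical_set[OF cs])
  have a1: "\<alpha> < 1" and t1: "\<theta> + 1 > 0" using params_basic[OF p] by auto
  have "length s \<ge> 1" using False by (cases s) auto
  then have tpos: "t > 0" using t1 by (simp add: t_def)
  define g where "g i = (if i \<le> V then real (count_list s i) - \<alpha> else \<theta> + \<alpha> * real V)" for i
  have hw: "hw_weights \<alpha> \<theta> s = map (\<lambda>i. (i, g i)) [1..<V+2]"
    by (simp add: hw_weights_def V_def[symmetric] g_def)
  have tsum: "sum_list (map snd (hw_weights \<alpha> \<theta> s)) = t"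
  proof -
    have "sum_list (map snd (hw_weights \<alpha> \<theta> s)) = (\<Sum>i\<in>{1..<V+2}. g i)"
      by (simp add: hw o_def interv_sum_list_conv_sum_set_nat)
    also have "{1..<V+2} = insert (V+1) {1..V}" by auto
    also have "(\<Sum>i\<in>insert (V+1) {1..V}. g i) = g (V+1) + (\<Sum>i\<in>{1..V}. g i)"
      by (rule sum.insert) auto
    also have "(\<Sum>i\<in>{1..V}. g i) = (\<Sum>i\<in>{1..V}. (real (count_list s i) - \<alpha>))"
      by (rule sum.cong) (auto simp: g_def)
    also have "g (V+1) = \<theta> + \<alpha> * real V" by (simp add: g_def)
    also have "(\<Sum>i\<in>{1..V}. (real (count_list s i) - \<alpha>)) = real (length s) - \<alpha> * real V"
    proof -
      have "(\<Sum>i\<in>{1..V}. real (count_list s i)) = real (length s)"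
        using sum_count_set[of s "{1..V}"] setS by (simp flip: of_nat_sum)
      then show ?thesis by (simp add: sum_subtractf)
    qed
    finally show ?thesis by (simp add: t_def)
  qed
  have step: "hw_step \<alpha> \<theta> s = pmf_of_list (map (\<lambda>i. (i, g i / t)) [1..<V+2])"
  proof -
    have "hw_step \<alpha> \<theta> s = pmf_of_list (map (\<lambda>(i, x). (i, x / t)) (hw_weights \<alpha> \<theta> s))"
      using False by (simp add: hw_step_def Let_def tsum)
    also have "\<dots> = pmf_of_list (map (\<lambda>i. (i, g i / t)) [1..<V+2])"
      by (simp only: hw map_map o_def prod.case)
    finally show ?thesis .
  qed
  have nn: "g i / t \<ge> 0" if "i \<in> set [1..<V+2]" for i
  proof -
    have "g i \<ge> 0"
    proof (cases "i \<le> V")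
      case True
      then have "i \<in> set s" using that setS by auto
      then have "0 < count_list s i" using count_mset_gt_0[of i s] by (simp only: count_mset)
      then have "count_list s i \<ge> 1" by simp
      then show ?thesis using True a1 by (simp add: g_def)
    next
      case False
      then show ?thesis using w by (simp add: g_def)
    qed
    then show ?thesis using tpos by simp
  qed
  have s1: "sum_list (map (\<lambda>i. g i / t) [1..<V+2]) = 1"
  proof -
    have "sum_list (map (\<lambda>i. g i / t) [1..<V+2]) = sum_list (map g [1..<V+2]) / t"
      by (simp only: interv_sum_list_conv_sum_set_nat sum_divide_distrib)
    also have "sum_list (map g [1..<V+2]) = t"
      using tsum by (simp add: hw o_def)
    finally show ?thesis using tpos by simp
  qed
  have "pmf (hw_step \<alpha> \<theta> s) x = (if x \<in> set [1..<V+2] then g x / t else 0)"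
    unfolding step by (rule pmf_of_list_distinct[OF distinct_upt nn s1])
  also have "\<dots> = rr \<alpha> \<theta> s x"
    using False setS by (auto simp: rr_def g_def t_def V_def[symmetric])
  finally show ?thesis .
qed

fun Rf :: "real \<Rightarrow> real \<Rightarrow> nat list \<Rightarrow> nat list \<Rightarrow> real" where
  "Rf \<alpha> \<theta> s [] = 1"
| "Rf \<alpha> \<theta> s (x # xs) = rr \<alpha> \<theta> s x * Rf \<alpha> \<theta> (s @ [x]) xs"

lemma Rf_append: "Rf \<alpha> \<theta> s (xs @ ys) = Rf \<alpha> \<theta> s xs * Rf \<alpha> \<theta> (s @ xs) ys"
  by (induction xs arbitrary: s) auto

lemma Rf_snoc: "Rf \<alpha> \<theta> [] (xs @ [x]) = Rf \<alpha> \<theta> [] xs * rr \<alpha> \<theta> xs x"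
  by (simp add: Rf_append)

lemma good_step:
  assumes p: "params \<alpha> \<theta>" and g: "good \<alpha> \<theta> s" and r: "rr \<alpha> \<theta> s x \<noteq> 0"
  shows "good \<alpha> \<theta> (s @ [x])"
proof (cases "s = []")
  case True
  then have x: "x = 1" using r by (simp add: rr_def split: if_splits)
  have c: "canonical [1]" using canonical_snoc[of "[]" 1] by simp
  have "\<theta> + \<alpha> \<ge> 0" using p unfolding params_def
  proof (elim disjE conjE exE)
    fix k :: nat assume a: "\<alpha> < 0" "k > 0" "\<theta> = - real k * \<alpha>"
    then have eq: "\<theta> + \<alpha> = (real k - 1) * (- \<alpha>)" by (simp add: algebra_simps)
    have "(real k - 1) * (- \<alpha>) \<ge> 0" by (rule mult_nonneg_nonneg) (use a in auto)
    then show ?thesis unfolding eq .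
  qed simp
  then show ?thesis using True x c by (simp add: good_def)
next
  case False
  define V where "V = card (set s)"
  have cs: "canonical s" and w: "\<theta> + \<alpha> * real V \<ge> 0" using g False by (auto simp: good_def V_def)
  have t1: "\<theta> + 1 > 0" using params_basic[OF p] by simp
  have xs: "x \<in> set s \<or> (x = Suc V \<and> \<theta> + \<alpha> * real V \<noteq> 0)"
    using r False by (auto simp: rr_def V_def split: if_splits)
  show ?thesis
  proof (cases "x \<in> set s")
    case True
    then have "set (s @ [x]) = set s" by auto
    then show ?thesis using cs True w canonical_snoc[of s x] by (simp add: good_def V_def)
  next
    case nx: False
    then have x: "x = Suc V" and w2: "\<theta> + \<alpha> * real V > 0" using xs w by auto
    have c: "canonical (s @ [x])" using canonical_snoc[of s x] cs x by (simp add: V_def)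
    have cd: "card (set (s @ [x])) = Suc V" using nx by (simp add: V_def)
    have "\<theta> + \<alpha> * real (Suc V) \<ge> 0" using p unfolding params_def
    proof (elim disjE conjE exE)
      assume "0 < \<alpha>"
      then show ?thesis using w by (simp add: algebra_simps)
    next
      fix k :: nat assume a: "\<alpha> < 0" "k > 0" "\<theta> = - real k * \<alpha>"
      have e1: "\<theta> + \<alpha> * real V = (real k - real V) * (- \<alpha>)" using a by (simp add: algebra_simps)
      then have "(real k - real V) * (- \<alpha>) > 0" using w2 by simp
      then have pos: "(real k - real V) * (- \<alpha>) > 0" .
      have "\<not> (real k - real V \<le> 0)"
      proof
        assume h: "real k - real V \<le> 0"
        have "(real k - real V) * (- \<alpha>) \<le> 0" by (rule mult_nonpos_nonneg) (use h a in auto)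
        then show False using pos by linarith
      qed
      then have "real k - real V > 0" by linarith
      then have "V < k" by simp
      then have "Suc V \<le> k" by simp
      then have "real (Suc V) \<le> real k" by (simp only: of_nat_le_iff)
      then have "real k \<ge> real V + 1" by simp
      then have ge: "(real k - real V - 1) * (- \<alpha>) \<ge> 0" by (intro mult_nonneg_nonneg) (use a in auto)
      have eq: "\<theta> + \<alpha> * real (Suc V) = (real k - real V - 1) * (- \<alpha>)" using a by (simp add: algebra_simps)
      show ?thesis unfolding eq by (rule ge)
    qed
    then show ?thesis using c cd by (simp add: good_def)
  qed
qed

lemma pmf_bind_single:
  assumes "\<And>a. a \<in> set_pmf A \<Longrightarrow> a \<noteq> a0 \<Longrightarrow> pmf (f a) z = 0"
  shows "pmf (bind_pmf A f) z = pmf A a0 * pmf (f a0) z"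
proof -
  have "pmf (bind_pmf A f) z = (\<integral>a. pmf (f a) z \<partial>measure_pmf A)"
    by (rule pmf_bind)
  also have "\<dots> = (\<Sum>a\<in>{a0}. pmf (f a) z * pmf A a)"
    by (rule integral_measure_pmf_real) (use assms in auto)
  finally show ?thesis by simp
qed

lemma pmf_map_Cons:
  "pmf (map_pmf ((#) x) M) z = (case z of [] \<Rightarrow> 0 | y # ys \<Rightarrow> if y = x then pmf M ys else 0)"
proof (cases z)
  case Nil
  then have "z \<notin> set_pmf (map_pmf ((#) x) M)" by auto
  then have "pmf (map_pmf ((#) x) M) z = 0" by (metis pmf_eq_0_set_pmf)
  then show ?thesis using Nil by simp
next
  case (Cons y ys)
  show ?thesis
  proof (cases "y = x")
    case True
    then show ?thesis using Cons by (simp add: pmf_map_inj')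
  next
    case False
    then have "z \<notin> set_pmf (map_pmf ((#) x) M)" using Cons by auto
    then have "pmf (map_pmf ((#) x) M) z = 0" by (metis pmf_eq_0_set_pmf)
    then show ?thesis using Cons False by simp
  qed
qed

lemma edge_pmf:
  assumes p: "params \<alpha> \<theta>"
  shows "good \<alpha> \<theta> s \<Longrightarrow> pmf (hw_edge \<alpha> \<theta> k s) xs = (if length xs = k then Rf \<alpha> \<theta> s xs else 0)"
proof (induction k arbitrary: s xs)
  case 0
  then show ?case by (cases xs) auto
next
  case (Suc k)
  have e: "hw_edge \<alpha> \<theta> (Suc k) s = bind_pmf (hw_step \<alpha> \<theta> s) (\<lambda>x. map_pmf ((#) x) (hw_edge \<alpha> \<theta> k (s @ [x])))"
    by (simp add: map_pmf_def)
  show ?case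
  proof (cases xs)
    case Nil
    then show ?thesis unfolding e by (simp add: pmf_bind pmf_map_Cons)
  next
    case (Cons y ys)
    have "pmf (hw_edge \<alpha> \<theta> (Suc k) s) xs
        = pmf (hw_step \<alpha> \<theta> s) y * pmf (map_pmf ((#) y) (hw_edge \<alpha> \<theta> k (s @ [y]))) xs"
      unfolding e by (rule pmf_bind_single) (auto simp: pmf_map_Cons Cons)
    also have "\<dots> = rr \<alpha> \<theta> s y * pmf (hw_edge \<alpha> \<theta> k (s @ [y])) ys"
      by (simp add: step_pmf[OF p Suc.prems] pmf_map_Cons Cons)
    also have "\<dots> = (if length xs = Suc k then Rf \<alpha> \<theta> s xs else 0)"
    proof (cases "rr \<alpha> \<theta> s y = 0")
      case True
      then show ?thesis by (simp add: Cons)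
    next
      case False
      have "good \<alpha> \<theta> (s @ [y])" by (rule good_step[OF p Suc.prems False])
      then show ?thesis using Suc.IH by (simp add: Cons)
    qed
    finally show ?thesis .
  qed
qed

lemma Rf_nz_good:
  assumes p: "params \<alpha> \<theta>"
  shows "Rf \<alpha> \<theta> [] ds \<noteq> 0 \<Longrightarrow> good \<alpha> \<theta> ds"
proof (induction ds rule: rev_induct)
  case Nil
  then show ?case by (simp add: good_def)
next
  case (snoc x xs)
  then have a: "Rf \<alpha> \<theta> [] xs \<noteq> 0" and b: "rr \<alpha> \<theta> xs x \<noteq> 0" by (auto simp: Rf_snoc)
  show ?case by (rule good_step[OF p snoc.IH[OF a] b])
qed

definition G :: "real \<Rightarrow> real \<Rightarrow> nat multiset \<Rightarrow> real" where
  "G \<alpha> \<theta> M = (\<Prod>j\<in>{1..<card (set_mset M)}. \<theta> + real j * \<alpha>) *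
      (\<Prod>i\<in>set_mset M. \<Prod>m\<in>{1..<count M i}. (real m - \<alpha>)) /
      (\<Prod>m\<in>{1..<size M}. \<theta> + real m)"

lemma Rf_closed:
  assumes p: "params \<alpha> \<theta>"
  shows "canonical ds \<Longrightarrow> Rf \<alpha> \<theta> [] ds = G \<alpha> \<theta> (mset ds)"
proof (induction ds rule: rev_induct)
  case Nil
  then show ?case by (simp add: G_def)
next
  case (snoc x xs)
  have cx: "canonical xs" and xr: "x \<in> set xs \<or> x = Suc (card (set xs))"
    using snoc.prems by (auto simp: canonical_snoc)
  have IH: "Rf \<alpha> \<theta> [] xs = G \<alpha> \<theta> (mset xs)" by (rule snoc.IH[OF cx])
  have t1: "\<theta> + 1 > 0" using params_basic[OF p] by simp
  have "Rf \<alpha> \<theta> [] (xs @ [x]) = G \<alpha> \<theta> (mset xs) * rr \<alpha> \<theta> xs x"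
    by (simp add: Rf_snoc IH)
  also have "\<dots> = G \<alpha> \<theta> (mset (xs @ [x]))"
  proof (cases "xs = []")
    case True
    then have "x = 1" using xr by simp
    then show ?thesis using True by (simp add: G_def rr_def)
  next
    case False
    define L where "L = length xs"
    define V where "V = card (set xs)"
    define M where "M = mset xs"
    have L1: "L \<ge> 1" using False by (cases xs) (auto simp: L_def)
    have tL: "\<theta> + real L > 0" using t1 L1 by linarith
    have sizeM: "size M = L" by (simp add: M_def L_def)
    have setM: "set_mset M = set xs" by (simp add: M_def)
    have cardM: "card (set_mset M) = V" by (simp add: setM V_def)
    have msnoc: "mset (xs @ [x]) = add_mset x M" by (simp add: M_def)
    define P1 where "P1 = (\<Prod>j\<in>{1..<V}. \<theta> + real j * \<alpha>)"
    define P2 where "P2 = (\<Prod>i\<in>set xs. \<Prod>m\<in>{1..<count M i}. (real m - \<alpha>))"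
    define P3 where "P3 = (\<Prod>m\<in>{1..<L}. \<theta> + real m)"
    have GM: "G \<alpha> \<theta> M = P1 * P2 / P3" by (simp add: G_def P1_def P2_def P3_def setM V_def sizeM)
    have P3': "(\<Prod>m\<in>{1..<size (add_mset x M)}. \<theta> + real m) = P3 * (\<theta> + real L)"
      using L1 by (simp add: sizeM P3_def prod.atLeastLessThan_Suc)
    have P3pos: "P3 > 0" unfolding P3_def
      by (rule prod_pos) (use t1 in auto)
    then have P3nz: "P3 \<noteq> 0" by simp
    show ?thesis
    proof (cases "x \<in> set xs")
      case True
      define c where "c = count M x"
      have c1: "c \<ge> 1" using True by (simp add: c_def M_def)
      have rrx: "rr \<alpha> \<theta> xs x = (real c - \<alpha>) / (real L + \<theta>)"
        using True False by (simp add: rr_def c_def M_def L_def count_mset)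
      have set': "set_mset (add_mset x M) = set xs" using True by (auto simp: setM)
      have P2': "(\<Prod>i\<in>set_mset (add_mset x M). \<Prod>m\<in>{1..<count (add_mset x M) i}. (real m - \<alpha>))
           = P2 * (real c - \<alpha>)"
      proof -
        have "(\<Prod>i\<in>set xs. \<Prod>m\<in>{1..<count (add_mset x M) i}. (real m - \<alpha>))
            = (\<Prod>m\<in>{1..<count (add_mset x M) x}. (real m - \<alpha>)) *
              (\<Prod>i\<in>set xs - {x}. \<Prod>m\<in>{1..<count (add_mset x M) i}. (real m - \<alpha>))"
          using True by (simp add: prod.remove)
        also have "(\<Prod>i\<in>set xs - {x}. \<Prod>m\<in>{1..<count (add_mset x M) i}. (real m - \<alpha>))
            = (\<Prod>i\<in>set xs - {x}. \<Prod>m\<in>{1..<count M i}. (real m - \<alpha>))"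
          by (rule prod.cong) auto
        also have "(\<Prod>m\<in>{1..<count (add_mset x M) x}. (real m - \<alpha>))
            = (\<Prod>m\<in>{1..<c}. (real m - \<alpha>)) * (real c - \<alpha>)"
        proof -
          have "count (add_mset x M) x = Suc c" by (simp add: c_def)
          moreover have "(\<Prod>m\<in>{1..<Suc c}. (real m - \<alpha>)) = (\<Prod>m\<in>{1..<c}. (real m - \<alpha>)) * (real c - \<alpha>)"
            by (rule prod.atLeastLessThan_Suc) (use c1 in simp)
          ultimately show ?thesis by simp
        qed
        also have "P2 = (\<Prod>m\<in>{1..<c}. (real m - \<alpha>)) *
              (\<Prod>i\<in>set xs - {x}. \<Prod>m\<in>{1..<count M i}. (real m - \<alpha>))"
          unfolding P2_def c_def using True by (simp add: prod.remove)
        ultimately show ?thesis using set' by (simp add: algebra_simps)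
      qed
      have "G \<alpha> \<theta> (add_mset x M) = P1 * (P2 * (real c - \<alpha>)) / (P3 * (\<theta> + real L))"
        unfolding G_def P2' P3' using set' by (simp add: P1_def V_def)
      also have "\<dots> = G \<alpha> \<theta> M * rr \<alpha> \<theta> xs x"
        using tL P3nz by (simp add: GM rrx field_simps)
      finally show ?thesis by (simp add: M_def[symmetric] msnoc)
    next
      case nx: False
      then have x: "x = Suc V" using xr by (simp add: V_def)
      have V1: "V \<ge> 1" using False by (simp add: V_def card_gt_0_iff Suc_le_eq)
      have rrx: "rr \<alpha> \<theta> xs x = (\<theta> + \<alpha> * real V) / (real L + \<theta>)"
        using nx False x by (simp add: rr_def L_def V_def)
      have set': "set_mset (add_mset x M) = insert x (set xs)" by (simp add: setM)
      have card': "card (set_mset (add_mset x M)) = Suc V" using nx by (simp add: setM V_def)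
      have P1': "(\<Prod>j\<in>{1..<card (set_mset (add_mset x M))}. \<theta> + real j * \<alpha>) = P1 * (\<theta> + real V * \<alpha>)"
        unfolding card' P1_def by (rule prod.atLeastLessThan_Suc) (use V1 in simp)
      have P2': "(\<Prod>i\<in>set_mset (add_mset x M). \<Prod>m\<in>{1..<count (add_mset x M) i}. (real m - \<alpha>)) = P2"
      proof -
        have xM: "count M x = 0" using nx by (simp add: M_def)
        have "(\<Prod>i\<in>insert x (set xs). \<Prod>m\<in>{1..<count (add_mset x M) i}. (real m - \<alpha>))
            = (\<Prod>m\<in>{1..<count (add_mset x M) x}. (real m - \<alpha>)) *
              (\<Prod>i\<in>set xs. \<Prod>m\<in>{1..<count (add_mset x M) i}. (real m - \<alpha>))"
          using nx by (simp add: prod.insert)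
        also have "(\<Prod>m\<in>{1..<count (add_mset x M) x}. (real m - \<alpha>)) = 1"
          using xM by simp
        also have "(\<Prod>i\<in>set xs. \<Prod>m\<in>{1..<count (add_mset x M) i}. (real m - \<alpha>)) = P2"
          unfolding P2_def by (rule prod.cong) (use nx in auto)
        finally show ?thesis by (simp add: setM)
      qed
      have "G \<alpha> \<theta> (add_mset x M) = P1 * (\<theta> + real V * \<alpha>) * P2 / (P3 * (\<theta> + real L))"
        unfolding G_def P1' P2' P3' by simp
      also have "\<dots> = G \<alpha> \<theta> M * rr \<alpha> \<theta> xs x"
        using tL P3nz by (simp add: GM rrx field_simps)
      finally show ?thesis by (simp add: M_def[symmetric] msnoc)
    qed
  qed
  finally show ?case .
qed

lemma edge_length: "xs \<in> set_pmf (hw_edge \<alpha> \<theta> k s) \<Longrightarrow> length xs = k"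
  by (induction k arbitrary: s xs) auto

lemma pmf_map_snoc:
  "pmf (map_pmf (\<lambda>e. es @ [e]) M) (es @ [e']) = pmf M e'"
proof -
  have "inj (\<lambda>e. es @ [e])" by (rule injI) simp
  from pmf_map_inj'[OF this, of M e'] show ?thesis by simp
qed

lemma holly_pmf:
  assumes p: "params \<alpha> \<theta>"
  shows "pmf (hollywood \<alpha> \<theta> \<nu> n) es =
    (if length es = n then prod_list (map (\<lambda>e. pmf \<nu> (length e)) es) * Rf \<alpha> \<theta> [] (concat es) else 0)"
proof (induction n arbitrary: es)
  case 0
  then show ?case by (cases es) auto
next
  case (Suc n)
  have h: "hollywood \<alpha> \<theta> \<nu> (Suc n) = bind_pmf (hollywood \<alpha> \<theta> \<nu> n) (\<lambda>es0. bind_pmf \<nu> (\<lambda>k.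
       map_pmf (\<lambda>e. es0 @ [e]) (hw_edge \<alpha> \<theta> k (concat es0))))"
    by (simp add: map_pmf_def)
  show ?case
  proof (cases es rule: rev_exhaust)
    case Nil
    have "es \<notin> set_pmf (hollywood \<alpha> \<theta> \<nu> (Suc n))" unfolding h using Nil by auto
    then have "pmf (hollywood \<alpha> \<theta> \<nu> (Suc n)) es = 0" by (metis pmf_eq_0_set_pmf)
    then show ?thesis using Nil by simp
  next
    case (snoc es' e)
    define c where "c = concat es'"
    have "pmf (hollywood \<alpha> \<theta> \<nu> (Suc n)) es = pmf (hollywood \<alpha> \<theta> \<nu> n) es' *
        pmf (bind_pmf \<nu> (\<lambda>k. map_pmf (\<lambda>e. es' @ [e]) (hw_edge \<alpha> \<theta> k (concat es')))) es"
      unfolding h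
    proof (rule pmf_bind_single)
      fix a assume "a \<noteq> es'"
      then have "es \<notin> set_pmf (bind_pmf \<nu> (\<lambda>k. map_pmf (\<lambda>e. a @ [e]) (hw_edge \<alpha> \<theta> k (concat a))))"
        using snoc by auto
      then show "pmf (bind_pmf \<nu> (\<lambda>k. map_pmf (\<lambda>e. a @ [e]) (hw_edge \<alpha> \<theta> k (concat a)))) es = 0"
        by (metis pmf_eq_0_set_pmf)
    qed
    also have "pmf (bind_pmf \<nu> (\<lambda>k. map_pmf (\<lambda>e. es' @ [e]) (hw_edge \<alpha> \<theta> k (concat es')))) es
        = pmf \<nu> (length e) * pmf (hw_edge \<alpha> \<theta> (length e) c) e"
    proof -
      have "pmf (bind_pmf \<nu> (\<lambda>k. map_pmf (\<lambda>e. es' @ [e]) (hw_edge \<alpha> \<theta> k (concat es')))) es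
          = pmf \<nu> (length e) * pmf (map_pmf (\<lambda>e. es' @ [e]) (hw_edge \<alpha> \<theta> (length e) (concat es'))) es"
      proof (rule pmf_bind_single)
        fix k assume "k \<noteq> length e"
        then have "e \<notin> set_pmf (hw_edge \<alpha> \<theta> k (concat es'))" using edge_length by blast
        then have "pmf (hw_edge \<alpha> \<theta> k (concat es')) e = 0" by (metis pmf_eq_0_set_pmf)
        then show "pmf (map_pmf (\<lambda>e. es' @ [e]) (hw_edge \<alpha> \<theta> k (concat es'))) es = 0"
          using snoc by (simp add: pmf_map_snoc)
      qed
      then show ?thesis using snoc by (simp add: pmf_map_snoc c_def)
    qed
    also have "pmf (hollywood \<alpha> \<theta> \<nu> n) es' * (pmf \<nu> (length e) * pmf (hw_edge \<alpha> \<theta> (length e) c) e)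
        = (if length es = Suc n then prod_list (map (\<lambda>e. pmf \<nu> (length e)) es) * Rf \<alpha> \<theta> [] (concat es) else 0)"
    proof (cases "length es' = n")
      case False
      then show ?thesis using snoc Suc.IH by simp
    next
      case True
      define P where "P = prod_list (map (\<lambda>e. pmf \<nu> (length e)) es')"
      have IH: "pmf (hollywood \<alpha> \<theta> \<nu> n) es' = P * Rf \<alpha> \<theta> [] c"
        using Suc.IH True by (simp add: P_def c_def)
      have rhs: "prod_list (map (\<lambda>e. pmf \<nu> (length e)) es) * Rf \<alpha> \<theta> [] (concat es)
          = P * pmf \<nu> (length e) * (Rf \<alpha> \<theta> [] c * Rf \<alpha> \<theta> c e)"
        using snoc by (simp add: P_def c_def Rf_append)
      have L: "length es = Suc n" using snoc True by simp
      have "pmf (hollywood \<alpha> \<theta> \<nu> n) es' * (pmf \<nu> (length e) * pmf (hw_edge \<alpha> \<theta> (length e) c) e)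
          = P * pmf \<nu> (length e) * (Rf \<alpha> \<theta> [] c * Rf \<alpha> \<theta> c e)"
      proof (cases "P * Rf \<alpha> \<theta> [] c = 0")
        case True
        then have "P = 0 \<or> Rf \<alpha> \<theta> [] c = 0" by simp
        then show ?thesis using IH by auto
      next
        case False
        then have "Rf \<alpha> \<theta> [] c \<noteq> 0" by simp
        then have "good \<alpha> \<theta> c" by (rule Rf_nz_good[OF p])
        then have "pmf (hw_edge \<alpha> \<theta> (length e) c) e = Rf \<alpha> \<theta> c e" by (simp add: edge_pmf[OF p])
        then show ?thesis using IH by (simp add: algebra_simps)
      qed
      also have "\<dots> = prod_list (map (\<lambda>e. pmf \<nu> (length e)) es) * Rf \<alpha> \<theta> [] (concat es)"
        by (rule rhs[symmetric])
      finally show ?thesis using L by simp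
    qed
    finally show ?thesis .
  qed
qed

definition canon_es :: "nat list list \<Rightarrow> nat list list" where
  "canon_es es = map (map (cf (concat es))) es"

lemma concat_canon_es: "concat (canon_es es) = map (cf (concat es)) (concat es)"
  by (simp add: canon_es_def map_concat)

lemma canonical_canon_es: "canonical (concat (canon_es es))"
  by (simp add: concat_canon_es canonical_canon)

lemma canon_es_fix:
  assumes "canonical (concat es)"
  shows "canon_es es = es"
proof -
  have "\<And>e y. e \<in> set es \<Longrightarrow> y \<in> set e \<Longrightarrow> cf (concat es) y = y"
    using canonical_fix[OF assms] by auto
  then show ?thesis unfolding canon_es_def by (intro map_idI) auto
qed

lemma canon_es_map:
  assumes inj: "inj_on f (set (concat es))"
  shows "canon_es (map (map f) es) = canon_es es"
proof -
  have c: "concat (map (map f) es) = map f (concat es)" by (simp add: map_concat)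
  have "\<And>e y. e \<in> set es \<Longrightarrow> y \<in> set e \<Longrightarrow> cf (map f (concat es)) (f y) = cf (concat es) y"
    using cf_map[OF inj] by auto
  then show ?thesis unfolding canon_es_def c by auto
qed

lemma network_bij:
  assumes "bij \<pi>"
  shows "network (map (map \<pi>) es) = network es"
proof
  show "network (map (map \<pi>) es) \<subseteq> network es"
  proof
    fix z assume "z \<in> network (map (map \<pi>) es)"
    then obtain \<rho> where "bij \<rho>" "z = map (map \<rho>) (map (map \<pi>) es)" by (auto simp: network_def)
    then have "z = map (map (\<rho> \<circ> \<pi>)) es" "bij (\<rho> \<circ> \<pi>)" using assms by (auto simp: bij_comp)
    then have "z \<in> {map (map \<rho>) es | \<rho>. bij \<rho>}" by blast
    then show "z \<in> network es" by (simp only: network_def)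
  qed
next
  show "network es \<subseteq> network (map (map \<pi>) es)"
  proof
    fix z assume "z \<in> network es"
    then obtain \<rho> where r: "bij \<rho>" "z = map (map \<rho>) es" by (auto simp: network_def)
    have "(\<rho> \<circ> inv \<pi>) \<circ> \<pi> = \<rho>" using assms by (simp add: o_assoc[symmetric] bij_is_inj)
    then have "z = map (map (\<rho> \<circ> inv \<pi>)) (map (map \<pi>) es)" using r by (simp add: o_assoc[symmetric])
    moreover have "bij (\<rho> \<circ> inv \<pi>)" using assms r by (simp add: bij_comp bij_imp_bij_inv)
    ultimately have "z \<in> {map (map \<rho>) (map (map \<pi>) es) | \<rho>. bij \<rho>}" by blast
    then show "z \<in> network (map (map \<pi>) es)" by (simp only: network_def)
  qed
qed

lemma network_inj:
  assumes inj: "inj_on f (set (concat es))"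
  shows "network (map (map f) es) = network es"
proof -
  obtain \<pi> where p: "bij \<pi>" "\<forall>x\<in>set (concat es). \<pi> x = f x"
    using bij_extend[OF _ inj] by blast
  have e: "map (map f) es = map (map \<pi>) es" using p(2) by auto
  show ?thesis unfolding e by (rule network_bij[OF p(1)])
qed

lemma network_canon_es: "network (canon_es es) = network es"
  unfolding canon_es_def by (rule network_inj) (rule inj_cf)

lemma mset_concat_perm:
  assumes "\<tau> permutes {..<length es}"
  shows "mset (concat (permute_list \<tau> es)) = mset (concat es)"
proof -
  have "mset (map mset (permute_list \<tau> es)) = mset (map mset es)"
    using assms by (simp add: permute_list_map[symmetric] mset_permute_list)
  then have "sum_mset (mset (map mset (permute_list \<tau> es))) = sum_mset (mset (map mset es))" by (rule arg_cong)
  then have "sum_list (map mset (permute_list \<tau> es)) = sum_list (map mset es)" by (simp only: sum_mset_sum_list)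
  then show ?thesis by (simp only: mset_concat)
qed

lemma prod_list_perm:
  fixes g :: "'a \<Rightarrow> 'b::comm_monoid_mult"
  assumes "\<tau> permutes {..<length es}"
  shows "prod_list (map g (permute_list \<tau> es)) = prod_list (map g es)"
proof -
  have "mset (map g (permute_list \<tau> es)) = mset (map g es)"
    using assms by (simp add: permute_list_map[symmetric] mset_permute_list)
  then have "prod_mset (mset (map g (permute_list \<tau> es))) = prod_mset (mset (map g es))" by (rule arg_cong)
  then show ?thesis by (simp only: prod_mset_prod_list)
qed

lemma G_image:
  assumes inj: "inj_on f (set_mset M)"
  shows "G \<alpha> \<theta> (image_mset f M) = G \<alpha> \<theta> M"
proof -
  have cnt: "count (image_mset f M) (f i) = count M i" if "i \<in># M" for i
  proof -
    have "f -` {f i} \<inter> set_mset M = {i}" using inj that by (auto dest: inj_onD)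
    then show ?thesis by (simp add: count_image_mset)
  qed
  have c: "card (set_mset (image_mset f M)) = card (set_mset M)"
    using inj by (simp add: card_image)
  have p: "(\<Prod>i\<in>set_mset (image_mset f M). \<Prod>m\<in>{1..<count (image_mset f M) i}. (real m - \<alpha>))
         = (\<Prod>i\<in>set_mset M. \<Prod>m\<in>{1..<count M i}. (real m - \<alpha>))"
  proof -
    have "(\<Prod>i\<in>f ` set_mset M. \<Prod>m\<in>{1..<count (image_mset f M) i}. (real m - \<alpha>))
        = (\<Prod>i\<in>set_mset M. \<Prod>m\<in>{1..<count (image_mset f M) (f i)}. (real m - \<alpha>))"
      using prod.reindex[OF inj] by (simp add: o_def)
    also have "\<dots> = (\<Prod>i\<in>set_mset M. \<Prod>m\<in>{1..<count M i}. (real m - \<alpha>))"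
      by (rule prod.cong) (simp_all add: cnt)
    finally show ?thesis by simp
  qed
  show ?thesis unfolding G_def c p by simp
qed

definition hmap :: "(nat \<Rightarrow> nat) \<Rightarrow> nat list list \<Rightarrow> nat list list" where
  "hmap \<sigma> es = canon_es (edge_perm \<sigma> es)"

lemma hmap_props:
  assumes s: "\<sigma> permutes {..<length es}"
  shows "length (hmap \<sigma> es) = length es"
    and "canonical (concat (hmap \<sigma> es))"
    and "mset (concat (edge_perm \<sigma> es)) = mset (concat es)"
    and "set (concat (edge_perm \<sigma> es)) = set (concat es)"
    and "hmap \<sigma> es = map (map (cf (concat (edge_perm \<sigma> es)))) (edge_perm \<sigma> es)"
proof -
  have si: "inv \<sigma> permutes {..<length es}" using s by (rule permutes_inv)
  show "length (hmap \<sigma> es) = length es" by (simp add: hmap_def canon_es_def edge_perm_def)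
  show "canonical (concat (hmap \<sigma> es))" by (simp add: hmap_def canonical_canon_es)
  show m: "mset (concat (edge_perm \<sigma> es)) = mset (concat es)"
    unfolding edge_perm_def by (rule mset_concat_perm[OF si])
  show "set (concat (edge_perm \<sigma> es)) = set (concat es)"
    using arg_cong[OF m, of set_mset] by simp
  show "hmap \<sigma> es = map (map (cf (concat (edge_perm \<sigma> es)))) (edge_perm \<sigma> es)"
    by (simp add: hmap_def canon_es_def)
qed

lemma hmap_inv:
  assumes s: "\<sigma> permutes {..<length es}" and c: "canonical (concat es)"
  shows "hmap (inv \<sigma>) (hmap \<sigma> es) = es"
proof -
  define f where "f = cf (concat (edge_perm \<sigma> es))"
  have si: "inv \<sigma> permutes {..<length es}" using s by (rule permutes_inv)
  have inj: "inj_on f (set (concat es))"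
    using inj_cf[of "concat (edge_perm \<sigma> es)"] hmap_props(4)[OF s] by (simp add: f_def)
  have h: "hmap \<sigma> es = map (map f) (permute_list (inv \<sigma>) es)"
    by (simp add: hmap_def canon_es_def edge_perm_def f_def)
  have l: "length (map (map f) (permute_list (inv \<sigma>) es)) = length es" by simp
  have "edge_perm (inv \<sigma>) (hmap \<sigma> es) = permute_list \<sigma> (map (map f) (permute_list (inv \<sigma>) es))"
    unfolding h edge_perm_def using permutes_bij[OF s] by (simp add: inv_inv_eq)
  also have "\<dots> = map (map f) (permute_list \<sigma> (permute_list (inv \<sigma>) es))"
    by (rule permute_list_map) (simp add: s)
  also have "permute_list \<sigma> (permute_list (inv \<sigma>) es) = permute_list (inv \<sigma> \<circ> \<sigma>) es"
    by (rule permute_list_compose[symmetric]) (rule s)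
  also have "inv \<sigma> \<circ> \<sigma> = id" using s by (rule permutes_inv_o)
  finally have "edge_perm (inv \<sigma>) (hmap \<sigma> es) = map (map f) es" by simp
  then have "hmap (inv \<sigma>) (hmap \<sigma> es) = canon_es (map (map f) es)" by (simp add: hmap_def)
  also have "\<dots> = canon_es es" by (rule canon_es_map[OF inj])
  also have "\<dots> = es" by (rule canon_es_fix[OF c])
  finally show ?thesis .
qed

lemma map_pmf_bij_eq:
  assumes supp: "set_pmf p \<subseteq> C"
    and hC: "\<And>x. x \<in> C \<Longrightarrow> h x \<in> C" and gC: "\<And>x. x \<in> C \<Longrightarrow> g x \<in> C"
    and gh: "\<And>x. x \<in> C \<Longrightarrow> g (h x) = x" and hg: "\<And>x. x \<in> C \<Longrightarrow> h (g x) = x"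
    and pr: "\<And>x. x \<in> C \<Longrightarrow> pmf p (h x) = pmf p x"
  shows "map_pmf h p = p"
proof (rule pmf_eqI)
  fix x
  have "pmf (map_pmf h p) x = measure p (h -` {x})" by (rule pmf_map)
  also have "\<dots> = measure p (h -` {x} \<inter> set_pmf p)" by (rule measure_Int_set_pmf[symmetric])
  also have "\<dots> = pmf p x"
  proof (cases "x \<in> C")
    case True
    have "h -` {x} \<inter> set_pmf p = {g x} \<inter> set_pmf p"
    proof
      show "h -` {x} \<inter> set_pmf p \<subseteq> {g x} \<inter> set_pmf p"
      proof
        fix y assume y: "y \<in> h -` {x} \<inter> set_pmf p"
        then have "y \<in> C" using supp by auto
        then have "g (h y) = y" by (rule gh)
        then show "y \<in> {g x} \<inter> set_pmf p" using y by auto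
      qed
      show "{g x} \<inter> set_pmf p \<subseteq> h -` {x} \<inter> set_pmf p"
        using hg[OF True] by auto
    qed
    then have "measure p (h -` {x} \<inter> set_pmf p) = measure p {g x}"
      by (simp add: measure_Int_set_pmf)
    also have "\<dots> = pmf p (g x)" by (rule measure_pmf_single)
    also have "\<dots> = pmf p (h (g x))" by (rule pr[OF gC[OF True], symmetric])
    also have "\<dots> = pmf p x" by (simp add: hg[OF True])
    finally show ?thesis .
  next
    case False
    have "h -` {x} \<inter> set_pmf p = {}" using False hC supp by auto
    moreover have "x \<notin> set_pmf p" using False supp by auto
    ultimately show ?thesis by (simp add: pmf_eq_0_set_pmf)
  qed
  finally show "pmf (map_pmf h p) x = pmf p x" .
qed

lemma holly_support:
  assumes p: "params \<alpha> \<theta>" and es: "es \<in> set_pmf (hollywood \<alpha> \<theta> \<nu> n)"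
  shows "length es = n \<and> canonical (concat es)"
proof -
  have nz: "pmf (hollywood \<alpha> \<theta> \<nu> n) es \<noteq> 0" using es by (simp add: set_pmf_iff)
  then have l: "length es = n" by (simp add: holly_pmf[OF p] split: if_splits)
  have "Rf \<alpha> \<theta> [] (concat es) \<noteq> 0" using nz by (simp add: holly_pmf[OF p] split: if_splits)
  then have "good \<alpha> \<theta> (concat es)" by (rule Rf_nz_good[OF p])
  then show ?thesis using l by (simp add: good_def)
qed

lemma hmap_pmf:
  assumes p: "params \<alpha> \<theta>" and s: "\<sigma> permutes {..<length es}" and c: "canonical (concat es)"
  shows "pmf (hollywood \<alpha> \<theta> \<nu> n) (hmap \<sigma> es) = pmf (hollywood \<alpha> \<theta> \<nu> n) es"
proof -
  define f where "f = cf (concat (edge_perm \<sigma> es))"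
  have si: "inv \<sigma> permutes {..<length es}" using s by (rule permutes_inv)
  have h: "hmap \<sigma> es = map (map f) (edge_perm \<sigma> es)" by (simp add: hmap_def canon_es_def f_def)
  have len: "length (hmap \<sigma> es) = length es" by (rule hmap_props(1)[OF s])
  have pl: "prod_list (map (\<lambda>e. pmf \<nu> (length e)) (hmap \<sigma> es)) = prod_list (map (\<lambda>e. pmf \<nu> (length e)) es)"
  proof -
    have "map (\<lambda>e. pmf \<nu> (length e)) (hmap \<sigma> es) = map (\<lambda>e. pmf \<nu> (length e)) (permute_list (inv \<sigma>) es)"
      by (simp add: h edge_perm_def)
    then show ?thesis using prod_list_perm[OF si] by simp
  qed
  have rf: "Rf \<alpha> \<theta> [] (concat (hmap \<sigma> es)) = Rf \<alpha> \<theta> [] (concat es)"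
  proof -
    have "Rf \<alpha> \<theta> [] (concat (hmap \<sigma> es)) = G \<alpha> \<theta> (mset (concat (hmap \<sigma> es)))"
      by (rule Rf_closed[OF p hmap_props(2)[OF s]])
    also have "mset (concat (hmap \<sigma> es)) = image_mset f (mset (concat (edge_perm \<sigma> es)))"
      unfolding h map_concat[symmetric] by (rule mset_map)
    also have "G \<alpha> \<theta> (image_mset f (mset (concat (edge_perm \<sigma> es)))) = G \<alpha> \<theta> (mset (concat (edge_perm \<sigma> es)))"
    proof (rule G_image)
      show "inj_on f (set_mset (mset (concat (edge_perm \<sigma> es))))"
        unfolding set_mset_mset f_def by (rule inj_cf)
    qed
    also have "mset (concat (edge_perm \<sigma> es)) = mset (concat es)" by (rule hmap_props(3)[OF s])
    also have "G \<alpha> \<theta> (mset (concat es)) = Rf \<alpha> \<theta> [] (concat es)"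
      by (rule Rf_closed[OF p c, symmetric])
    finally show ?thesis .
  qed
  show ?thesis by (simp add: holly_pmf[OF p] len pl rf)
qed

theorem theorem5p1:
  fixes \<alpha> \<theta> :: real and \<nu> :: "nat pmf"
  assumes nu_pos: "0 \<notin> set_pmf \<nu>"
    and params: "(0 < \<alpha> \<and> \<alpha> < 1 \<and> \<theta> > - \<alpha>) \<or>
                 (\<alpha> < 0 \<and> (\<exists>k::nat. k > 0 \<and> \<theta> = - real k * \<alpha>))"
  shows "\<forall>n. \<forall>\<sigma>. \<sigma> permutes {..<n} \<longrightarrow>
           map_pmf (\<lambda>es. network (edge_perm \<sigma> es)) (hollywood \<alpha> \<theta> \<nu> n)
             = hollywood_network \<alpha> \<theta> \<nu> n"
proof (intro allI impI)
  fix n :: nat and \<sigma> :: "nat \<Rightarrow> nat"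
  assume s: "\<sigma> permutes {..<n}"
  have p: "params \<alpha> \<theta>" using params by (simp add: params_def)
  define P where "P = hollywood \<alpha> \<theta> \<nu> n"
  define C where "C = {es. length es = n \<and> canonical (concat es)}"
  have si: "inv \<sigma> permutes {..<n}" using s by (rule permutes_inv)
  have iis: "inv (inv \<sigma>) = \<sigma>" using permutes_bij[OF s] by (simp add: inv_inv_eq)
  have mp: "map_pmf (hmap \<sigma>) P = P"
  proof (rule map_pmf_bij_eq[where C = C and g = "hmap (inv \<sigma>)"])
    show "set_pmf P \<subseteq> C" using holly_support[OF p] by (auto simp: P_def C_def)
  next
    fix x assume "x \<in> C"
    then have l: "length x = n" and c: "canonical (concat x)" by (auto simp: C_def)
    have s': "\<sigma> permutes {..<length x}" using s l by simp
    have si': "inv \<sigma> permutes {..<length x}" using si l by simp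
    show "hmap \<sigma> x \<in> C" using hmap_props(1,2)[OF s'] l by (simp add: C_def)
    show "hmap (inv \<sigma>) x \<in> C" using hmap_props(1,2)[OF si'] l by (simp add: C_def)
    show "hmap (inv \<sigma>) (hmap \<sigma> x) = x" by (rule hmap_inv[OF s' c])
    have "hmap (inv (inv \<sigma>)) (hmap (inv \<sigma>) x) = x" by (rule hmap_inv[OF si' c])
    then show "hmap \<sigma> (hmap (inv \<sigma>) x) = x" by (simp add: iis)
    show "pmf P (hmap \<sigma> x) = pmf P x" unfolding P_def by (rule hmap_pmf[OF p s' c])
  qed
  have e: "(\<lambda>es. network (edge_perm \<sigma> es)) = (\<lambda>es. network (hmap \<sigma> es))"
    by (rule ext) (simp add: hmap_def network_canon_es)
  have "map_pmf (\<lambda>es. network (edge_perm \<sigma> es)) P = map_pmf network (map_pmf (hmap \<sigma>) P)"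
    unfolding e by (simp add: map_pmf_comp)
  also have "\<dots> = map_pmf network P" by (simp only: mp)
  finally show "map_pmf (\<lambda>es. network (edge_perm \<sigma> es)) (hollywood \<alpha> \<theta> \<nu> n) = hollywood_network \<alpha> \<theta> \<nu> n"
    by (simp add: P_def hollywood_network_def)
qed

end
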